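(* Let $G=(V,E)$ be a graph with $V=\{1,\dots,n\}$ and let $k\ge 2$ be an integer with $\binom{k}{2}\le|E|$. For each edge $e=\{i,j\}$ let $\psi^e\in\mathbb{R}^n$ be the vector with $\psi^e_i=\psi^e_j=1$ and all other coordinates $0$. Let \[ S=\Big\{x\in\mathbb{R}^n:\ |\{e\in E: x\ge\psi^e \text{ coordinatewise}\}|\ge\tbinom{k}{2}\Big\}. \] Then (i) $S$ is star-shaped, with $(1,\dots,1)\in K_S$; and (ii) $G$ has a clique with $k$ vertices if and only if there exists $x\in S$ with $\sum_{i=1}^n x_i\le k$.
   Context: The kernel of a set $S\subseteq\mathbb{R}^n$ is $K_S=\{x\in S:[x,y]\subseteq S\ \forall y\in S\}$, where $[x,y]$ is the closed segment; $S$ is star-shaped if $K_S\ne\emptyset$. *)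

theory Defs
  imports "HOL-Analysis.Analysis"
begin

text \<open>Vertices are the elements of the finite type 'n (playing the role of {1..n}),
  so R^n is real^'n. An edge is a 2-element set of vertices.\<close>

definition psi :: "'n::finite set \<Rightarrow> real^'n" where
  "psi e = (\<chi> i. if i \<in> e then 1 else 0)"

definition kernel :: "'a::real_vector set \<Rightarrow> 'a set" where
  "kernel S = {x \<in> S. \<forall>y\<in>S. closed_segment x y \<subseteq> S}"

definition star_shaped :: "'a::real_vector set \<Rightarrow> bool" where
  "star_shaped S \<longleftrightarrow> kernel S \<noteq> {}"


definition S_set :: "'n::finite set set \<Rightarrow> nat \<Rightarrow> (real^'n) set" where
  "S_set E k = {x. card {e \<in> E. \<forall>i. psi e $ i \<le> x $ i} \<ge> k choose 2}"

end

theory Submission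
  imports Defs
begin

lemma choose2_strict: "m < k \<Longrightarrow> 2 \<le> k \<Longrightarrow> m choose 2 < k choose (2::nat)"
proof (induction k arbitrary: m)
  case 0 then show ?case by simp
next
  case (Suc k)
  have eq: "Suc k choose 2 = k + (k choose 2)"
    by (simp add: numeral_2_eq_2)
  show ?case
  proof (cases "m < k")
    case True
    then have "k \<ge> 2 \<or> k = 1 \<or> k = 0" by auto
    then show ?thesis
    proof (elim disjE)
      assume "k \<ge> 2" then show ?thesis using Suc.IH[OF True] eq by simp
    next
      assume "k = 1" then show ?thesis using True by (simp add: numeral_2_eq_2)
    next
      assume "k = 0" then show ?thesis using True by simp
    qed
  next
    case False
    then have "m = k" using Suc.prems by simp
    then show ?thesis using eq Suc.prems by simp
  qed
qed

lemma psi_nonneg: "(\<forall>i. psi e $ i \<le> x $ i) \<Longrightarrow> i \<in> e \<Longrightarrow> 1 \<le> x $ i"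
proof -
  assume a: "\<forall>i. psi e $ i \<le> x $ i" and b: "i \<in> e"
  have "psi e $ i = 1" using b by (simp add: psi_def)
  then show ?thesis using a by metis
qed

lemma psi_le_nonneg: "(\<forall>i. psi e $ i \<le> x $ i) \<Longrightarrow> 0 \<le> x $ i"
proof -
  assume a: "\<forall>i. psi e $ i \<le> x $ i"
  have "0 \<le> psi e $ i" by (simp add: psi_def)
  then show ?thesis using a order_trans by metis
qed

lemma S_iff: "x \<in> S_set E k \<longleftrightarrow> k choose 2 \<le> card {e \<in> E. \<forall>i. psi e $ i \<le> x $ i}"
  unfolding S_set_def by (rule mem_Collect_eq)

lemma card_S_pos:
  assumes "x \<in> S_set E k" "k \<ge> 2"
  shows "\<exists>e\<in>E. \<forall>i. psi e $ i \<le> x $ i"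
proof (rule ccontr)
  assume "\<not> ?thesis"
  then have "{e \<in> E. \<forall>i. psi e $ i \<le> x $ i} = {}" by auto
  moreover have "k choose 2 > 0" using assms(2) by simp
  moreover have "k choose 2 \<le> card {e \<in> E. \<forall>i. psi e $ i \<le> x $ i}"
    using assms(1) unfolding S_set_def by blast
  ultimately show False by (metis card.empty not_le)
qed

theorem mainTheorem17:
  fixes E :: "'n::finite set set" and k :: nat
  assumes edges: "\<forall>e\<in>E. card e = 2"
    and k2: "k \<ge> 2"
    and kE: "k choose 2 \<le> card E"
  shows "star_shaped (S_set E k) \<and> (\<chi> i. 1) \<in> kernel (S_set E k) \<and>
    ((\<exists>C. card C = k \<and> (\<forall>i\<in>C. \<forall>j\<in>C. i \<noteq> j \<longrightarrow> {i, j} \<in> E))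
      \<longleftrightarrow> (\<exists>x\<in>S_set E k. (\<Sum>i\<in>UNIV. x $ i) \<le> real k))"
proof -
  have finE: "finite E" by simp
  let ?one = "(\<chi> i. 1) :: real^'n"
  have one_in: "?one \<in> S_set E k"
  proof -
    have "{e \<in> E. \<forall>i. psi e $ i \<le> ?one $ i} = E" by (auto simp: psi_def)
    then have "card {e \<in> E. \<forall>i. psi e $ i \<le> ?one $ i} = card E" by simp
    then show ?thesis using kE unfolding S_iff by linarith
  qed
  have ker: "?one \<in> kernel (S_set E k)"
    unfolding kernel_def
  proof (intro CollectI conjI ballI subsetI one_in)
    fix y z assume y: "y \<in> S_set E k" and z: "z \<in> closed_segment ?one y"
    obtain u where u: "0 \<le> u" "u \<le> 1" "z = (1 - u) *\<^sub>R ?one + u *\<^sub>R y"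
      using z unfolding closed_segment_def by auto
    obtain e0 where "e0 \<in> E" "\<forall>i. psi e0 $ i \<le> y $ i" using card_S_pos[OF y k2] by blast
    then have ynn: "\<And>i. 0 \<le> y $ i" using psi_le_nonneg by blast
    have zc: "\<And>i. z $ i = (1 - u) + u * y $ i" using u(3) by simp
    have sub: "{e \<in> E. \<forall>i. psi e $ i \<le> y $ i} \<subseteq> {e \<in> E. \<forall>i. psi e $ i \<le> z $ i}"
    proof safe
      fix e i assume "e \<in> E" "\<forall>i. psi e $ i \<le> y $ i"
      then have h: "psi e $ i \<le> y $ i" by blast
      show "psi e $ i \<le> z $ i"
      proof (cases "i \<in> e")
        case True
        then have "1 \<le> y $ i" using h by (simp add: psi_def)
        then have "u * 1 \<le> u * y $ i" using u(1) by (intro mult_left_mono) auto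
        moreover have "psi e $ i = 1" using True by (simp add: psi_def)
        ultimately show ?thesis using zc[of i] by linarith
      next
        case False
        have "0 \<le> u * y $ i" using u(1) ynn[of i] by simp
        moreover have "psi e $ i = 0" using False by (simp add: psi_def)
        ultimately show ?thesis using zc[of i] u(2) by linarith
      qed
    qed
    have "card {e \<in> E. \<forall>i. psi e $ i \<le> y $ i} \<le> card {e \<in> E. \<forall>i. psi e $ i \<le> z $ i}"
      by (rule card_mono[OF _ sub]) simp
    then show "z \<in> S_set E k" using y unfolding S_iff by linarith
  qed
  have clique: "(\<exists>C. card C = k \<and> (\<forall>i\<in>C. \<forall>j\<in>C. i \<noteq> j \<longrightarrow> {i, j} \<in> E))
      \<longleftrightarrow> (\<exists>x\<in>S_set E k. (\<Sum>i\<in>UNIV. x $ i) \<le> real k)"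
  proof
    assume "\<exists>C. card C = k \<and> (\<forall>i\<in>C. \<forall>j\<in>C. i \<noteq> j \<longrightarrow> {i, j} \<in> E)"
    then obtain C where C: "card C = k" "\<forall>i\<in>C. \<forall>j\<in>C. i \<noteq> j \<longrightarrow> {i, j} \<in> E" by blast
    define x :: "real^'n" where "x = (\<chi> i. if i \<in> C then 1 else 0)"
    have finC: "finite C" by simp
    have "{B. B \<subseteq> C \<and> card B = 2} \<subseteq> {e \<in> E. \<forall>i. psi e $ i \<le> x $ i}"
    proof safe
      fix B assume B: "B \<subseteq> C" "card B = 2"
      then obtain a b where "a \<noteq> b" "B = {a, b}" by (meson card_2_iff)
      then show "B \<in> E" using B C(2) by auto
      fix i show "psi B $ i \<le> x $ i" using B(1) by (auto simp: psi_def x_def)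
    qed
    then have "card {B. B \<subseteq> C \<and> card B = 2} \<le> card {e \<in> E. \<forall>i. psi e $ i \<le> x $ i}"
      by (rule card_mono[rotated]) (use finE in auto)
    then have "k choose 2 \<le> card {e \<in> E. \<forall>i. psi e $ i \<le> x $ i}"
      using n_subsets[OF finC, of 2] C(1) by simp
    then have "x \<in> S_set E k" unfolding S_iff .
    moreover have "(\<Sum>i\<in>UNIV. x $ i) = real k"
    proof -
      have "(\<Sum>i\<in>UNIV. x $ i) = (\<Sum>i\<in>UNIV. if i \<in> C then 1 else 0)" by (simp add: x_def)
      also have "\<dots> = real (card C)" by (simp add: sum.If_cases)
      finally show ?thesis using C(1) by simp
    qed
    ultimately show "\<exists>x\<in>S_set E k. (\<Sum>i\<in>UNIV. x $ i) \<le> real k" by (intro bexI[of _ x]) auto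
  next
    assume "\<exists>x\<in>S_set E k. (\<Sum>i\<in>UNIV. x $ i) \<le> real k"
    then obtain x where x: "x \<in> S_set E k" "(\<Sum>i\<in>UNIV. x $ i) \<le> real k" by blast
    define F where "F = {e \<in> E. \<forall>i. psi e $ i \<le> x $ i}"
    define C where "C = {i. 1 \<le> x $ i}"
    have cardF: "k choose 2 \<le> card F" using x(1) unfolding F_def S_iff .
    obtain e0 where "e0 \<in> E" "\<forall>i. psi e0 $ i \<le> x $ i" using card_S_pos[OF x(1) k2] by blast
    then have xnn: "\<And>i. 0 \<le> x $ i" using psi_le_nonneg by blast
    have "real (card C) = (\<Sum>i\<in>C. 1)" by simp
    also have "\<dots> \<le> (\<Sum>i\<in>C. x $ i)" by (rule sum_mono) (simp add: C_def)
    also have "\<dots> \<le> (\<Sum>i\<in>UNIV. x $ i)" by (rule sum_mono2) (auto simp: xnn)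
    finally have "real (card C) \<le> real k" using x(2) by linarith
    then have cC: "card C \<le> k" by simp
    have FC: "F \<subseteq> {B. B \<subseteq> C \<and> card B = 2}"
    proof
      fix e assume e: "e \<in> F"
      then have "e \<in> E" "\<forall>i. psi e $ i \<le> x $ i" by (simp_all add: F_def)
      then have "e \<subseteq> C" "card e = 2" using edges psi_nonneg unfolding C_def by blast+
      then show "e \<in> {B. B \<subseteq> C \<and> card B = 2}" by simp
    qed
    have finC: "finite C" by simp
    have "card F \<le> card C choose 2"
      using card_mono[OF _ FC] n_subsets[OF finC, of 2] by simp
    then have ck: "card C = k" using cardF cC choose2_strict[of "card C" k] k2 by linarith
    have "card F = card {B. B \<subseteq> C \<and> card B = 2}"
      using \<open>card F \<le> _\<close> cardF ck card_mono[OF _ FC] n_subsets[OF finC, of 2] by simp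
    then have Feq: "F = {B. B \<subseteq> C \<and> card B = 2}"
      by (intro card_subset_eq[OF _ FC]) simp_all
    have "\<forall>i\<in>C. \<forall>j\<in>C. i \<noteq> j \<longrightarrow> {i, j} \<in> E"
    proof (intro ballI impI)
      fix i j assume "i \<in> C" "j \<in> C" "i \<noteq> j"
      then have "{i, j} \<in> F" using Feq by auto
      then show "{i, j} \<in> E" by (simp add: F_def)
    qed
    then show "\<exists>C. card C = k \<and> (\<forall>i\<in>C. \<forall>j\<in>C. i \<noteq> j \<longrightarrow> {i, j} \<in> E)" using ck by blast
  qed
  show ?thesis using ker clique unfolding star_shaped_def by auto
qed

end
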